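(* There is no sequence of maps $\varphi_0,\varphi_1,\varphi_2,\ldots$, each defined on the ideal $\mathcal{M}$ of meager subsets of $\mathbb{R}$ and taking values in the family of closed nowhere dense subsets of $\mathbb{R}$, such that both of the following hold: (a) $A\subseteq\bigcup_{i<\omega}\varphi_i(A)$ for every meager $A\subseteq\mathbb{R}$; (b) $\varphi_i(A)\subseteq\varphi_i(B)$ for all meager $A\subseteq B$ and all $i<\omega$. *)

theory Defs
  imports "HOL-Analysis.Analysis"
begin

definition nowhere_dense :: "'a::topological_space set \<Rightarrow> bool" where
  "nowhere_dense S \<longleftrightarrow> interior (closure S) = {}"

definition meager :: "'a::topological_space set \<Rightarrow> bool" where
  "meager A \<longleftrightarrow> (\<exists>N :: nat \<Rightarrow> 'a set. (\<forall>n. nowhere_dense (N n)) \<and> A \<subseteq> (\<Union>n. N n))"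

end

theory Submission
  imports Defs
begin

lemma nd_singleton: "nowhere_dense {x::real}"
  unfolding nowhere_dense_def by simp

lemma meager_countable:
  fixes D :: "real set" assumes "countable D" shows "meager D"
proof (cases "D = {}")
  case True
  then show ?thesis unfolding meager_def
    by (intro exI[of _ "\<lambda>n. {}"]) (simp add: nowhere_dense_def)
next
  case False
  then show ?thesis unfolding meager_def
    using assms nd_singleton
  proof (intro exI[of _ "\<lambda>n. {from_nat_into D n}"] conjI allI)
    show "nowhere_dense {from_nat_into D n}" for n by (rule nd_singleton)
    show "D \<subseteq> (\<Union>n. {from_nat_into D n})"
    proof
      fix x assume "x \<in> D"
      then obtain n where "from_nat_into D n = x" using from_nat_into_surj[OF assms] by blast
      then show "x \<in> (\<Union>n. {from_nat_into D n})" by blast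
    qed
  qed
qed

lemma countable_dense_sub:
  fixes S :: "real set"
  obtains D where "countable D" "D \<subseteq> S" "S \<subseteq> closure D"
proof -
  define P where "P = {(a,b). a \<in> \<rat> \<and> b \<in> \<rat> \<and> S \<inter> {a<..<b} \<noteq> {}}"
  define f where "f = (\<lambda>(a::real,b::real). SOME x. x \<in> S \<and> a < x \<and> x < b)"
  define D where "D = f ` P"
  have fP: "f p \<in> S \<and> fst p < f p \<and> f p < snd p" if "p \<in> P" for p
  proof -
    obtain a b where p: "p = (a,b)" by (cases p)
    with that have "\<exists>x. x \<in> S \<and> a < x \<and> x < b" unfolding P_def by auto
    then have "(SOME x. x \<in> S \<and> a < x \<and> x < b) \<in> S \<and> a < (SOME x. x \<in> S \<and> a < x \<and> x < b) \<and> (SOME x. x \<in> S \<and> a < x \<and> x < b) < b"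
      by (rule someI_ex)
    then show ?thesis unfolding f_def p by simp
  qed
  have "countable (\<rat> \<times> (\<rat>::real set))" by (intro countable_SIGMA countable_rat)
  moreover have "P \<subseteq> \<rat> \<times> \<rat>" unfolding P_def by auto
  ultimately have "countable P" using countable_subset by blast
  then have "countable D" unfolding D_def by simp
  moreover have "D \<subseteq> S" unfolding D_def using fP by force
  moreover have "S \<subseteq> closure D"
  proof
    fix x assume xS: "x \<in> S"
    show "x \<in> closure D"
    proof (clarsimp simp: closure_approachable)
      fix e :: real assume e: "0 < e"
      have "x - e < x" using e by simp
      then obtain a where a: "a \<in> \<rat>" "x - e < a" "a < x" using Rats_dense_in_real[of "x-e" x] by blast
      have "x < x + e" using e by simp
      then obtain b where b: "b \<in> \<rat>" "x < b" "b < x + e" using Rats_dense_in_real[of x "x+e"] by blast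
      have "(a,b) \<in> P" unfolding P_def using a b xS by auto
      then have "f (a,b) \<in> D" "a < f (a,b)" "f (a,b) < b" using fP[of "(a,b)"] unfolding D_def by (auto intro: imageI)
      then show "\<exists>y\<in>D. dist y x < e" using a b by (intro bexI[of _ "f (a,b)"]) (auto simp: dist_real_def)
    qed
  qed
  ultimately show ?thesis using that by blast
qed

theorem mainTheorem2:
  shows "\<not> (\<exists>\<phi> :: nat \<Rightarrow> real set \<Rightarrow> real set.
            (\<forall>i A. meager A \<longrightarrow> closed (\<phi> i A) \<and> nowhere_dense (\<phi> i A)) \<and>
            (\<forall>A. meager A \<longrightarrow> A \<subseteq> (\<Union>i. \<phi> i A)) \<and>
            (\<forall>i A B. meager A \<and> meager B \<and> A \<subseteq> B \<longrightarrow> \<phi> i A \<subseteq> \<phi> i B))"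
proof
  assume "\<exists>\<phi> :: nat \<Rightarrow> real set \<Rightarrow> real set.
            (\<forall>i A. meager A \<longrightarrow> closed (\<phi> i A) \<and> nowhere_dense (\<phi> i A)) \<and>
            (\<forall>A. meager A \<longrightarrow> A \<subseteq> (\<Union>i. \<phi> i A)) \<and>
            (\<forall>i A B. meager A \<and> meager B \<and> A \<subseteq> B \<longrightarrow> \<phi> i A \<subseteq> \<phi> i B)"
  then obtain \<phi> :: "nat \<Rightarrow> real set \<Rightarrow> real set" where H:
    "(\<forall>i A. meager A \<longrightarrow> closed (\<phi> i A) \<and> nowhere_dense (\<phi> i A)) \<and>
            (\<forall>A. meager A \<longrightarrow> A \<subseteq> (\<Union>i. \<phi> i A)) \<and>
            (\<forall>i A B. meager A \<and> meager B \<and> A \<subseteq> B \<longrightarrow> \<phi> i A \<subseteq> \<phi> i B)" ..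
  have cl: "\<And>i A. meager A \<Longrightarrow> closed (\<phi> i A) \<and> nowhere_dense (\<phi> i A)"
    using conjunct1[OF H] by simp
  have cov: "\<And>A. meager A \<Longrightarrow> A \<subseteq> (\<Union>i. \<phi> i A)"
    using conjunct1[OF conjunct2[OF H]] by simp
  have mono: "\<And>i A B. meager A \<Longrightarrow> meager B \<Longrightarrow> A \<subseteq> B \<Longrightarrow> \<phi> i A \<subseteq> \<phi> i B"
    using conjunct2[OF conjunct2[OF H]] by simp
  define S where "S i = {x. x \<in> \<phi> i {x}}" for i
  have msing: "meager {x::real}" for x
    unfolding meager_def using nd_singleton by (intro exI[of _ "\<lambda>n. {x}"]) auto
  have Scov: "\<exists>i. x \<in> S i" for x
  proof -
    have "x \<in> (\<Union>i. \<phi> i {x})" using cov[OF msing, of x] by blast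
    then show ?thesis unfolding S_def by simp
  qed
  have "\<exists>i. interior (closure (S i)) \<noteq> {}"
  proof (rule ccontr)
    assume "\<not> ?thesis"
    then have int0: "interior (closure (S i)) = {}" for i by blast
    let ?G = "range (\<lambda>i. - closure (S i))"
    have B: "(UNIV::real set) \<subseteq> closure (\<Inter>?G)"
    proof (rule Baire)
      show "closed (UNIV::real set)" by simp
      show "countable ?G" by simp
      fix T assume "T \<in> ?G"
      then obtain i where T: "T = - closure (S i)" by blast
      show "openin (top_of_set UNIV) T \<and> UNIV \<subseteq> closure T"
        using int0[of i] unfolding T by (simp add: closure_complement open_Compl)
    qed
    have E: "x \<notin> \<Inter>?G" for x
    proof -
      obtain i where "x \<in> S i" using Scov by blast
      then have "x \<in> closure (S i)" using closure_subset by blast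
      then show ?thesis by blast
    qed
    have "\<Inter>?G = {}" using E by blast
    then show False using B by simp
  qed
  then obtain i where ne: "interior (closure (S i)) \<noteq> {}" by blast
  obtain D where D: "countable D" "D \<subseteq> S i" "S i \<subseteq> closure D"
    using countable_dense_sub by blast
  have mD: "meager D" using meager_countable[OF D(1)] .
  have clD: "closed (\<phi> i D)" and ndD: "nowhere_dense (\<phi> i D)" using cl[OF mD] by auto
  have "D \<subseteq> \<phi> i D"
  proof
    fix d assume dD: "d \<in> D"
    then have "d \<in> \<phi> i {d}" using D(2) unfolding S_def by auto
    moreover have "\<phi> i {d} \<subseteq> \<phi> i D" using mono[OF msing mD] dD by simp
    ultimately show "d \<in> \<phi> i D" by blast
  qed
  then have c1: "closure D \<subseteq> \<phi> i D" using clD by (rule closure_minimal)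
  have "closure (S i) \<subseteq> closure D" using closure_mono[OF D(3)] by simp
  with c1 have "closure (S i) \<subseteq> closure (\<phi> i D)" using closure_subset by blast
  then have "interior (closure (S i)) \<subseteq> interior (closure (\<phi> i D))"
    by (rule interior_mono)
  moreover have "interior (closure (\<phi> i D)) = {}" using ndD unfolding nowhere_dense_def .
  ultimately show False using ne by simp
qed

end
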